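(* Let $g$ be the pp-wave metric $ds^2=H(u,x^1,x^2)\,du^2+2\,du\,dv+(dx^1)^2+(dx^2)^2$ and let $Y$ be a conformal Killing vector field of $g$, $\mathcal L_Yg=2\omega g$, of the form: there exist smooth functions $a(u),a_1(u),a_2(u),\bar b(u)$ and a constant $\mu$ with $$\omega=\bar b(u)+x^ia_i'(u)-\mu v,\qquad Y^u=\tfrac{\mu}{2}\delta_{ij}x^ix^j+a_i(u)x^i+a(u),$$ $$[\mu x^i+a_i(u)]\,\partial_iH=2\mu H+2a_i''(u)x^i-2a''(u)+4\bar b'(u).$$ For a real constant $c$ define the vector field $f$ by $f^u=0$, $$f^v=\tfrac{u}{2}\left(x^ia_i'(u)-a'(u)+2\bar b(u)-2\mu v\right)+\tfrac12x^ia_i(u)+\tfrac{\mu}{4}\delta_{ij}x^ix^j+\tfrac12a(u)-c\,\tfrac{\mu}{4}u^2,\qquad f^i=-\tfrac{u}{2}\left(\mu x^i+a_i(u)\right),$$ and set $\Upsilon=Y+c\,f$. Then $$\mathcal L_\Upsilon g_{\mu\nu}=2\Omega\left(g_{\mu\nu}+c\,K_{\mu\nu}\right),\qquad \Omega=\omega-\tfrac{c}{2}\mu u,\quad K=du\otimes du .$$ Consequently, for the geodesic Lagrangian $L=\frac{1}{2n}\left(H\dot u^2+2\dot u\dot v+(\dot x^1)^2+(\dot x^2)^2\right)-\frac{m^2}{2}n$, along any solution of its Euler–Lagrange equations on which the (always conserved) momentum $p_v=\dot u/n$ takes a constant value $\pi_v\neq0$, the quantity $I=\Upsilon^\mu p_\mu$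 with $c=m^2/\pi_v^2$ is constant.
   Context: Coordinates $(u,v,x^1,x^2)$, indices $i,j=1,2$ are summed with $\delta_{ij}$, $\partial_i=\partial/\partial x^i$, and primes denote $d/du$. $n(\lambda)>0$ is the einbein, dots are $d/d\lambda$, and $p_\mu=\partial L/\partial\dot{\mathrm x}^\mu$. $K=du\otimes du$ equals $\ell\otimes\ell$ with indices lowered, where $\ell=\partial_v$ is the covariantly constant null Killing vector of the pp-wave; thus $K^{\mu\nu}p_\mu p_\nu=p_v^2$. *)

theory Defs
  imports "HOL-Analysis.Analysis"
begin

text \<open>Coordinates on R^4 are indexed by the numeral type 4:
  index 0 = u, 1 = v, 2 = x^1, 3 = x^2. The spacetime is all of R^4.\<close>

definition iu :: 4 where "iu = 0"
definition iv :: 4 where "iv = 1"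
definition ix1 :: 4 where "ix1 = 2"
definition ix2 :: 4 where "ix2 = 3"

definition partial :: "4 \<Rightarrow> (real^4 \<Rightarrow> real) \<Rightarrow> real^4 \<Rightarrow> real" where
  "partial i F p = deriv (\<lambda>t. F (p + t *\<^sub>R axis i 1)) 0"

definition smooth4 :: "(real^4 \<Rightarrow> real) \<Rightarrow> bool" where
  "smooth4 F \<longleftrightarrow> (\<forall>is :: 4 list. \<forall>p. (foldr partial is F) differentiable (at p))"

definition smooth1 :: "(real \<Rightarrow> real) \<Rightarrow> bool" where
  "smooth1 f \<longleftrightarrow> (\<forall>k x. ((deriv ^^ k) f) differentiable (at x))"

definition smooth_vf :: "(real^4 \<Rightarrow> real^4) \<Rightarrow> bool" where
  "smooth_vf Y \<longleftrightarrow> (\<forall>i. smooth4 (\<lambda>p. Y p $ i))"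

definition Hfun :: "(real \<Rightarrow> real \<Rightarrow> real \<Rightarrow> real) \<Rightarrow> real^4 \<Rightarrow> real" where
  "Hfun H p = H (p $ iu) (p $ ix1) (p $ ix2)"

definition ppg :: "(real \<Rightarrow> real \<Rightarrow> real \<Rightarrow> real) \<Rightarrow> real^4 \<Rightarrow> 4 \<Rightarrow> 4 \<Rightarrow> real" where
  "ppg H p i j =
     (if i = iu \<and> j = iu then Hfun H p
      else if (i = iu \<and> j = iv) \<or> (i = iv \<and> j = iu) then 1
      else if (i = ix1 \<and> j = ix1) \<or> (i = ix2 \<and> j = ix2) then 1
      else 0)"

definition Kdu :: "4 \<Rightarrow> 4 \<Rightarrow> real" where
  "Kdu i j = (if i = iu \<and> j = iu then 1 else 0)"

definition lie_deriv :: "(real^4 \<Rightarrow> real^4) \<Rightarrow> (real^4 \<Rightarrow> 4 \<Rightarrow> 4 \<Rightarrow> real) \<Rightarrow> real^4 \<Rightarrow> 4 \<Rightarrow> 4 \<Rightarrow> real" where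
  "lie_deriv Y G p i j =
     (\<Sum>r\<in>UNIV. Y p $ r * partial r (\<lambda>q. G q i j) p)
   + (\<Sum>r\<in>UNIV. G p r j * partial i (\<lambda>q. Y q $ r) p)
   + (\<Sum>r\<in>UNIV. G p i r * partial j (\<lambda>q. Y q $ r) p)"

definition ffield :: "(real \<Rightarrow> real) \<Rightarrow> (real \<Rightarrow> real) \<Rightarrow> (real \<Rightarrow> real) \<Rightarrow> (real \<Rightarrow> real)
    \<Rightarrow> real \<Rightarrow> real \<Rightarrow> real^4 \<Rightarrow> real^4" where
  "ffield a a1 a2 bb \<mu> c p =
     (let u = p $ iu; v = p $ iv; x1 = p $ ix1; x2 = p $ ix2 in
      (\<chi> k. if k = iu then 0
            else if k = iv then
              u / 2 * (x1 * deriv a1 u + x2 * deriv a2 u - deriv a u + 2 * bb u - 2 * \<mu> * v)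
              + 1/2 * (x1 * a1 u + x2 * a2 u) + \<mu> / 4 * (x1\<^sup>2 + x2\<^sup>2) + 1/2 * a u
              - c * \<mu> / 4 * u\<^sup>2
            else if k = ix1 then - u / 2 * (\<mu> * x1 + a1 u)
            else - u / 2 * (\<mu> * x2 + a2 u)))"

definition Lgeo :: "(real \<Rightarrow> real \<Rightarrow> real \<Rightarrow> real) \<Rightarrow> real \<Rightarrow> real^4 \<Rightarrow> real^4 \<Rightarrow> real \<Rightarrow> real" where
  "Lgeo H m x xd n =
     1 / (2 * n) * (Hfun H x * (xd $ iu)\<^sup>2 + 2 * (xd $ iu) * (xd $ iv) + (xd $ ix1)\<^sup>2 + (xd $ ix2)\<^sup>2)
     - m\<^sup>2 / 2 * n"

definition dL_dx :: "(real^4 \<Rightarrow> real^4 \<Rightarrow> real \<Rightarrow> real) \<Rightarrow> 4 \<Rightarrow> real^4 \<Rightarrow> real^4 \<Rightarrow> real \<Rightarrow> real" where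
  "dL_dx L i x xd n = deriv (\<lambda>t. L (x + t *\<^sub>R axis i 1) xd n) 0"

definition dL_dxd :: "(real^4 \<Rightarrow> real^4 \<Rightarrow> real \<Rightarrow> real) \<Rightarrow> 4 \<Rightarrow> real^4 \<Rightarrow> real^4 \<Rightarrow> real \<Rightarrow> real" where
  "dL_dxd L i x xd n = deriv (\<lambda>t. L x (xd + t *\<^sub>R axis i 1) n) 0"

definition dL_dn :: "(real^4 \<Rightarrow> real^4 \<Rightarrow> real \<Rightarrow> real) \<Rightarrow> real^4 \<Rightarrow> real^4 \<Rightarrow> real \<Rightarrow> real" where
  "dL_dn L x xd n = deriv (\<lambda>s. L x xd s) n"

text \<open>(X, n) solves the Euler-Lagrange equations of L, with velocity Xd = dX/d lambda,
  positive einbein n; momenta p_mu = dL/d(xdot^mu).\<close>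
definition EL_solution :: "(real^4 \<Rightarrow> real^4 \<Rightarrow> real \<Rightarrow> real) \<Rightarrow> (real \<Rightarrow> real^4) \<Rightarrow> (real \<Rightarrow> real^4)
    \<Rightarrow> (real \<Rightarrow> real) \<Rightarrow> bool" where
  "EL_solution L X Xd n \<longleftrightarrow>
     (\<forall>t. (X has_vector_derivative Xd t) (at t)) \<and>
     (\<forall>t. n t > 0) \<and>
     (\<forall>i t. ((\<lambda>s. dL_dxd L i (X s) (Xd s) (n s)) has_real_derivative
               dL_dx L i (X t) (Xd t) (n t)) (at t)) \<and>
     (\<forall>t. dL_dn L (X t) (Xd t) (n t) = 0)"

end

theory Submission
  imports Defs
begin

lemma dist4: "iu \<noteq> iv" "iu \<noteq> ix1" "iu \<noteq> ix2" "iv \<noteq> ix1" "iv \<noteq> ix2" "ix1 \<noteq> ix2"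
  "iv \<noteq> iu" "ix1 \<noteq> iu" "ix2 \<noteq> iu" "ix1 \<noteq> iv" "ix2 \<noteq> iv" "ix2 \<noteq> ix1"
  by (simp_all add: iu_def iv_def ix1_def ix2_def)
lemma UNIV4: "(UNIV::4 set) = {iu, iv, ix1, ix2}"
  unfolding UNIV_4 iu_def iv_def ix1_def ix2_def by auto
lemma sum4: "sum f (UNIV::4 set) = f iu + f iv + f ix1 + f ix2"
  unfolding UNIV4 using dist4 by (simp add: ac_simps)
lemma vnth_deriv[derivative_intros]: "((\<lambda>q::real^4. q $ i) has_derivative (\<lambda>h. h $ i)) F"
  by (rule bounded_linear_imp_has_derivative) (rule bounded_linear_vec_nth)

lemma G1:
  assumes "(F has_derivative F') (at p)"
  shows "partial r F p = F' (axis r 1)"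
proof -
  have l: "((\<lambda>t::real. p + t *\<^sub>R axis r (1::real)) has_derivative (\<lambda>t. t *\<^sub>R axis r 1)) (at 0)"
    by (auto intro!: derivative_eq_intros)
  have "((\<lambda>t. F (p + t *\<^sub>R axis r 1)) has_derivative (\<lambda>t. F' (t *\<^sub>R axis r 1))) (at 0)"
    using has_derivative_compose[OF l] assms by simp
  moreover have "(\<lambda>t. F' (t *\<^sub>R axis r 1)) = (*) (F' (axis r 1))"
    using has_derivative_bounded_linear[OF assms] 
    by (auto simp: fun_eq_iff linear_simps bounded_linear.linear linear_scale)
  ultimately have "((\<lambda>t. F (p + t *\<^sub>R axis r 1)) has_real_derivative F' (axis r 1)) (at 0)"
    by (simp add: has_field_derivative_def)
  then show ?thesis unfolding partial_def by (rule DERIV_imp_deriv)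
qed

lemma G2:
  assumes "(F has_derivative F') (at p)"
  shows "F' (v::real^4) = (\<Sum>r\<in>UNIV. v $ r * F' (axis r 1))"
proof -
  have lin: "linear F'" using has_derivative_bounded_linear[OF assms] bounded_linear.linear by blast
  have "F' v = F' (\<Sum>r\<in>UNIV. v $ r *\<^sub>R axis r 1)"
    using basis_expansion[of v] by (simp add: scalar_mult_eq_scaleR)
  also have "\<dots> = (\<Sum>r\<in>UNIV. v $ r * F' (axis r 1))"
    by (simp add: linear_sum[OF lin] linear_scale[OF lin])
  finally show ?thesis .
qed

lemma G3:
  assumes "(X has_vector_derivative Xd) (at t)" "(F has_derivative F') (at (X t))"
  shows "((\<lambda>s. F (X s)) has_real_derivative F' Xd) (at t)"
proof -
  have "((\<lambda>s. F (X s)) has_derivative (\<lambda>h. F' (h *\<^sub>R Xd))) (at t)"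
    using has_derivative_compose[OF assms(1)[unfolded has_vector_derivative_def] assms(2)] by simp
  moreover have "(\<lambda>h. F' (h *\<^sub>R Xd)) = (*) (F' Xd)"
    using has_derivative_bounded_linear[OF assms(2)] 
    by (auto simp: fun_eq_iff bounded_linear.linear linear_scale)
  ultimately show ?thesis by (simp add: has_field_derivative_def)
qed
lemma sm_D: "smooth1 g \<Longrightarrow> DERIV g x :> deriv g x"
  unfolding smooth1_def using DERIV_deriv_iff_real_differentiable
  by (metis funpow_0)
lemma sm_DD: "smooth1 g \<Longrightarrow> DERIV (deriv g) x :> deriv (deriv g) x"
  unfolding smooth1_def using DERIV_deriv_iff_real_differentiable
  by (metis funpow_0 funpow_Suc_right comp_apply One_nat_def)
lemma compU: "smooth1 g \<Longrightarrow> ((\<lambda>q::real^4. g (q$iu)) has_derivative (\<lambda>h. h$iu * deriv g (p$iu))) (at p)"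
  by (rule DERIV_compose_FDERIV[OF sm_D]) (assumption, rule vnth_deriv)
lemma compU': "smooth1 g \<Longrightarrow> ((\<lambda>q::real^4. deriv g (q$iu)) has_derivative (\<lambda>h. h$iu * deriv (deriv g) (p$iu))) (at p)"
  by (rule DERIV_compose_FDERIV[OF sm_DD]) (assumption, rule vnth_deriv)

definition Dfv where "Dfv a a1 a2 bb \<mu> c p h =
  (let u = p $ iu; v = p $ iv; x1 = p $ ix1; x2 = p $ ix2 in
   h$iu/2*(x1 * deriv a1 u + x2 * deriv a2 u - deriv a u + 2 * bb u - 2 * \<mu> * v)
   + u/2*(h$ix1 * deriv a1 u + x1 * deriv (deriv a1) u * h$iu + h$ix2 * deriv a2 u + x2 * deriv (deriv a2) u * h$iu
          - deriv (deriv a) u * h$iu + 2 * deriv bb u * h$iu - 2 * \<mu> * h$iv)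
   + 1/2 * (h$ix1 * a1 u + x1 * deriv a1 u * h$iu + h$ix2 * a2 u + x2 * deriv a2 u * h$iu)
   + \<mu>/2 * (x1 * h$ix1 + x2 * h$ix2) + deriv a u * h$iu / 2 - c * \<mu> / 2 * u * h$iu)"

lemma fDv:
  assumes "smooth1 a" "smooth1 a1" "smooth1 a2" "smooth1 bb"
  shows "((\<lambda>q. ffield a a1 a2 bb \<mu> c q $ iv) has_derivative Dfv a a1 a2 bb \<mu> c p) (at p)"
  unfolding ffield_def Let_def Dfv_def using dist4
  apply simp
  apply (rule has_derivative_eq_rhs)
   apply (auto intro!: derivative_eq_intros compU compU' assms)[1]
  apply (simp add: fun_eq_iff field_simps power2_eq_square)
  done
definition Df1 where "Df1 a1 \<mu> p h = - (h$iu)/2*(\<mu> * p$ix1 + a1 (p$iu)) - p$iu/2*(\<mu> * h$ix1 + deriv a1 (p$iu) * h$iu)"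
definition Df2 where "Df2 a2 \<mu> p h = - (h$iu)/2*(\<mu> * p$ix2 + a2 (p$iu)) - p$iu/2*(\<mu> * h$ix2 + deriv a2 (p$iu) * h$iu)"
definition DF where "DF a a1 a2 bb \<mu> c k p h = (if k = iu then 0 else if k = iv then Dfv a a1 a2 bb \<mu> c p h
   else if k = ix1 then Df1 a1 \<mu> p h else Df2 a2 \<mu> p h)"

lemma fD1:
  assumes "smooth1 a1"
  shows "((\<lambda>q. ffield a a1 a2 bb \<mu> c q $ ix1) has_derivative Df1 a1 \<mu> p) (at p)"
  unfolding ffield_def Let_def Df1_def using dist4
  apply simp
  apply (rule has_derivative_eq_rhs)
   apply (auto intro!: derivative_eq_intros compU compU' assms)[1]
  apply (simp add: fun_eq_iff field_simps power2_eq_square)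
  done
lemma fD2:
  assumes "smooth1 a2"
  shows "((\<lambda>q. ffield a a1 a2 bb \<mu> c q $ ix2) has_derivative Df2 a2 \<mu> p) (at p)"
  unfolding ffield_def Let_def Df2_def using dist4
  apply simp
  apply (rule has_derivative_eq_rhs)
   apply (auto intro!: derivative_eq_intros compU compU' assms)[1]
  apply (simp add: fun_eq_iff field_simps power2_eq_square)
  done
lemma fDu:
  shows "((\<lambda>q. ffield a a1 a2 bb \<mu> c q $ iu) has_derivative (\<lambda>h. 0)) (at p)"
  unfolding ffield_def Let_def by simp

lemma all4: "(\<forall>i::4. P i) \<longleftrightarrow> P iu \<and> P iv \<and> P ix1 \<and> P ix2"
  using UNIV4 by (metis UNIV_I insertE singletonD)

lemma fD:
  assumes "smooth1 a" "smooth1 a1" "smooth1 a2" "smooth1 bb"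
  shows "((\<lambda>q. ffield a a1 a2 bb \<mu> c q $ k) has_derivative DF a a1 a2 bb \<mu> c k p) (at p)"
proof -
  have "\<forall>k. ((\<lambda>q. ffield a a1 a2 bb \<mu> c q $ k) has_derivative DF a a1 a2 bb \<mu> c k p) (at p)"
    unfolding all4 using fDu fDv[OF assms] fD1[OF assms(2)] fD2[OF assms(3)] dist4
    by (simp add: DF_def[abs_def])
  then show ?thesis by blast
qed

lemma partial_const: "partial r (\<lambda>q. k) p = 0"
  unfolding partial_def by simp

lemma partial_Hv: "partial iv (Hfun H) p = 0"
proof -
  have "(\<lambda>t. Hfun H (p + t *\<^sub>R axis iv 1)) = (\<lambda>t. Hfun H p)"
    using dist4 by (simp add: Hfun_def axis_def)
  then show ?thesis unfolding partial_def by simp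
qed
lemma YD: "smooth_vf Y \<Longrightarrow> ((\<lambda>q. Y q $ k) has_derivative frechet_derivative (\<lambda>q. Y q $ k) (at p)) (at p)"
  unfolding smooth_vf_def smooth4_def
  by (metis foldr_Nil id_apply frechet_derivative_works)

lemma UpsD:
  assumes "smooth_vf Y" "smooth1 a" "smooth1 a1" "smooth1 a2" "smooth1 bb"
  shows "((\<lambda>q. (Y q + c *\<^sub>R ffield a a1 a2 bb \<mu> c q) $ k) has_derivative
     (\<lambda>h. frechet_derivative (\<lambda>q. Y q $ k) (at p) h + c * DF a a1 a2 bb \<mu> c k p h)) (at p)"
proof -
  have "((\<lambda>q. Y q $ k + c * ffield a a1 a2 bb \<mu> c q $ k) has_derivative
     (\<lambda>h. frechet_derivative (\<lambda>q. Y q $ k) (at p) h + c * DF a a1 a2 bb \<mu> c k p h)) (at p)"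
    by (intro has_derivative_add has_derivative_mult_right YD fD assms)
  then show ?thesis by simp
qed

lemma partialUps:
  assumes "smooth_vf Y" "smooth1 a" "smooth1 a1" "smooth1 a2" "smooth1 bb"
  shows "partial r (\<lambda>q. (Y q + c *\<^sub>R ffield a a1 a2 bb \<mu> c q) $ k) p
     = partial r (\<lambda>q. Y q $ k) p + c * DF a a1 a2 bb \<mu> c k p (axis r 1)"
  using G1[OF UpsD[OF assms]] G1[OF YD[OF assms(1)]] by simp

lemma lie_split:
  assumes "smooth_vf Y" "smooth1 a" "smooth1 a1" "smooth1 a2" "smooth1 bb"
  shows "lie_deriv (\<lambda>q. Y q + c *\<^sub>R ffield a a1 a2 bb \<mu> c q) G p i j
    = lie_deriv Y G p i j + c * ((\<Sum>r\<in>UNIV. ffield a a1 a2 bb \<mu> c p $ r * partial r (\<lambda>q. G q i j) p)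
   + (\<Sum>r\<in>UNIV. G p r j * DF a a1 a2 bb \<mu> c r p (axis i 1))
   + (\<Sum>r\<in>UNIV. G p i r * DF a a1 a2 bb \<mu> c r p (axis j 1)))"
  unfolding lie_deriv_def partialUps[OF assms]
  by (simp add: sum.distrib sum_distrib_left algebra_simps)

lemma LF:
  assumes om: "\<forall>p. \<omega> p = bb (p $ iu) + p $ ix1 * deriv a1 (p $ iu) + p $ ix2 * deriv a2 (p $ iu)
                        - \<mu> * p $ iv"
    and Heq: "\<forall>p. (\<mu> * p $ ix1 + a1 (p $ iu)) * partial ix1 (Hfun H) p
                 + (\<mu> * p $ ix2 + a2 (p $ iu)) * partial ix2 (Hfun H) p
               = 2 * \<mu> * Hfun H p
                 + 2 * (deriv (deriv a1) (p $ iu) * p $ ix1 + deriv (deriv a2) (p $ iu) * p $ ix2)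
                 - 2 * deriv (deriv a) (p $ iu) + 4 * deriv bb (p $ iu)"
  shows "\<forall>i j. (\<Sum>r\<in>UNIV. ffield a a1 a2 bb \<mu> c p $ r * partial r (\<lambda>q. ppg H q i j) p)
   + (\<Sum>r\<in>UNIV. ppg H p r j * DF a a1 a2 bb \<mu> c r p (axis i 1))
   + (\<Sum>r\<in>UNIV. ppg H p i r * DF a a1 a2 bb \<mu> c r p (axis j 1))
   = 2 * \<omega> p * Kdu i j - \<mu> * p$iu * ppg H p i j - c * \<mu> * p$iu * Kdu i j"
  unfolding all4
  using dist4 Heq[rule_format, of p] om[rule_format, of p]
  apply (simp add: sum4 ppg_def Kdu_def DF_def Dfv_def Df1_def Df2_def axis_def partial_const partial_Hv ffield_def Let_def)
  apply (simp add: field_simps)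
  apply (thin_tac "_ \<noteq> _")+
  apply algebra
  done
lemma lineD:
  assumes "(F has_derivative F') (at p)"
  shows "((\<lambda>t. F (p + t *\<^sub>R axis r 1)) has_real_derivative partial r F p) (at 0)"
proof -
  have l: "((\<lambda>t::real. p + t *\<^sub>R axis r (1::real)) has_derivative (\<lambda>t. t *\<^sub>R axis r 1)) (at 0)"
    by (auto intro!: derivative_eq_intros)
  have "((\<lambda>t. F (p + t *\<^sub>R axis r 1)) has_derivative (\<lambda>t. F' (t *\<^sub>R axis r 1))) (at 0)"
    using has_derivative_compose[OF l] assms by simp
  moreover have "(\<lambda>t. F' (t *\<^sub>R axis r 1)) = (*) (F' (axis r 1))"
    using has_derivative_bounded_linear[OF assms] 
    by (auto simp: fun_eq_iff linear_simps bounded_linear.linear linear_scale)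
  ultimately show ?thesis using G1[OF assms]
    by (simp add: has_field_derivative_def)
qed

lemma dLxd: assumes "n \<noteq> 0"
  shows "dL_dxd (Lgeo H m) k x xd n = (\<Sum>b\<in>UNIV. ppg H x k b * xd $ b) / n"
proof -
  have "\<forall>k. ((\<lambda>t. Lgeo H m x (xd + t *\<^sub>R axis k 1) n) has_real_derivative (\<Sum>b\<in>UNIV. ppg H x k b * xd $ b) / n) (at 0)"
    unfolding all4 using dist4 assms
    apply (simp add: Lgeo_def axis_def sum4 ppg_def)
    apply (intro conjI; rule DERIV_cong; (auto intro!: derivative_eq_intros)?; simp add: field_simps power2_eq_square)
    done
  then show ?thesis unfolding dL_dxd_def by (meson DERIV_imp_deriv)
qed
lemma dLx: assumes "smooth4 (Hfun H)" "n \<noteq> 0"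
  shows "dL_dx (Lgeo H m) i x xd n = partial i (Hfun H) x * (xd$iu)\<^sup>2 / (2 * n)"
proof -
  have HD: "(Hfun H has_derivative frechet_derivative (Hfun H) (at x)) (at x)"
    using assms unfolding smooth4_def by (metis foldr_Nil id_apply frechet_derivative_works)
  have "((\<lambda>t. Lgeo H m (x + t *\<^sub>R axis i 1) xd n) has_real_derivative partial i (Hfun H) x * (xd$iu)\<^sup>2 / (2 * n)) (at 0)"
    unfolding Lgeo_def
    apply (rule DERIV_cong)
     apply (auto intro!: derivative_eq_intros lineD[OF HD] simp: assms)[1]
    using assms apply (simp add: field_simps)
    done
  then show ?thesis unfolding dL_dx_def by (meson DERIV_imp_deriv)
qed

lemma dLn: assumes "n \<noteq> 0"
  shows "dL_dn (Lgeo H m) x xd n = - (\<Sum>a\<in>UNIV. \<Sum>b\<in>UNIV. ppg H x a b * xd$a * xd$b) / (2 * n\<^sup>2) - m\<^sup>2/2"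
proof -
  have "((\<lambda>s. Lgeo H m x xd s) has_real_derivative - (\<Sum>a\<in>UNIV. \<Sum>b\<in>UNIV. ppg H x a b * xd$a * xd$b) / (2 * n\<^sup>2) - m\<^sup>2/2) (at n)"
    unfolding Lgeo_def
    apply (rule DERIV_cong)
     apply (auto intro!: derivative_eq_intros simp: assms)[1]
    using assms dist4 apply (simp add: sum4 ppg_def field_simps power2_eq_square)
    done
  then show ?thesis unfolding dL_dn_def by (meson DERIV_imp_deriv)
qed
lemma quad: assumes "n \<noteq> 0"
  shows "(\<Sum>k\<in>UNIV. (\<Sum>r\<in>UNIV. v$r * partial r (\<lambda>q. U q $ k) x) * ((\<Sum>b\<in>UNIV. ppg H x k b * v$b)/n)
      + U x $ k * (partial k (Hfun H) x * (v$iu)\<^sup>2 / (2 * n)))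
   = (\<Sum>a\<in>UNIV. \<Sum>b\<in>UNIV. lie_deriv U (ppg H) x a b * v$a * v$b) / (2 * n)"
  using assms dist4
  apply (simp add: lie_deriv_def sum4 ppg_def partial_const)
  apply (simp add: field_simps power2_eq_square)
  done
lemma Ups_chain:
  assumes "smooth_vf Y" "smooth1 a" "smooth1 a1" "smooth1 a2" "smooth1 bb"
    and "(X has_vector_derivative Xd) (at t)"
  shows "((\<lambda>s. (Y (X s) + c *\<^sub>R ffield a a1 a2 bb \<mu> c (X s)) $ k) has_real_derivative
     (\<Sum>r\<in>UNIV. Xd $ r * partial r (\<lambda>q. (Y q + c *\<^sub>R ffield a a1 a2 bb \<mu> c q) $ k) (X t))) (at t)"
proof -
  note D = UpsD[OF assms(1-5), where c=c and k=k and p="X t" and \<mu>=\<mu>]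
  have "((\<lambda>s. (Y (X s) + c *\<^sub>R ffield a a1 a2 bb \<mu> c (X s)) $ k) has_real_derivative
     (frechet_derivative (\<lambda>q. Y q $ k) (at (X t)) Xd + c * DF a a1 a2 bb \<mu> c k (X t) Xd)) (at t)"
    using G3[OF assms(6) D] by simp
  moreover have "frechet_derivative (\<lambda>q. Y q $ k) (at (X t)) Xd + c * DF a a1 a2 bb \<mu> c k (X t) Xd
     = (\<Sum>r\<in>UNIV. Xd $ r * partial r (\<lambda>q. (Y q + c *\<^sub>R ffield a a1 a2 bb \<mu> c q) $ k) (X t))"
    using G2[OF D, of Xd] G1[OF D] by simp
  ultimately show ?thesis by simp
qed

theorem mainTheorem4:
  fixes H :: "real \<Rightarrow> real \<Rightarrow> real \<Rightarrow> real"
    and Y :: "real^4 \<Rightarrow> real^4"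
    and a a1 a2 bb :: "real \<Rightarrow> real"
    and \<mu> :: real
    and \<omega> :: "real^4 \<Rightarrow> real"
  assumes smH: "smooth4 (Hfun H)"
    and smY: "smooth_vf Y"
    and sma: "smooth1 a" and sma1: "smooth1 a1" and sma2: "smooth1 a2" and smb: "smooth1 bb"
    and CKV: "\<forall>p i j. lie_deriv Y (ppg H) p i j = 2 * \<omega> p * ppg H p i j"
    and om: "\<forall>p. \<omega> p = bb (p $ iu) + p $ ix1 * deriv a1 (p $ iu) + p $ ix2 * deriv a2 (p $ iu)
                        - \<mu> * p $ iv"
    and Yu: "\<forall>p. Y p $ iu = \<mu> / 2 * ((p $ ix1)\<^sup>2 + (p $ ix2)\<^sup>2)
                        + a1 (p $ iu) * p $ ix1 + a2 (p $ iu) * p $ ix2 + a (p $ iu)"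
    and Heq: "\<forall>p. (\<mu> * p $ ix1 + a1 (p $ iu)) * partial ix1 (Hfun H) p
                 + (\<mu> * p $ ix2 + a2 (p $ iu)) * partial ix2 (Hfun H) p
               = 2 * \<mu> * Hfun H p
                 + 2 * (deriv (deriv a1) (p $ iu) * p $ ix1 + deriv (deriv a2) (p $ iu) * p $ ix2)
                 - 2 * deriv (deriv a) (p $ iu) + 4 * deriv bb (p $ iu)"
  shows "(\<forall>c p i j.
            lie_deriv (\<lambda>q. Y q + c *\<^sub>R ffield a a1 a2 bb \<mu> c q) (ppg H) p i j
            = 2 * (\<omega> p - c / 2 * \<mu> * p $ iu) * (ppg H p i j + c * Kdu i j))
       \<and> (\<forall>m X Xd n \<pi>v.
            EL_solution (Lgeo H m) X Xd n
            \<and> (\<forall>t. dL_dxd (Lgeo H m) iv (X t) (Xd t) (n t) = \<pi>v) \<and> \<pi>v \<noteq> 0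
            \<longrightarrow> (let c = m\<^sup>2 / \<pi>v\<^sup>2;
                     I = (\<lambda>t. \<Sum>k\<in>UNIV. (Y (X t) + c *\<^sub>R ffield a a1 a2 bb \<mu> c (X t)) $ k
                                       * dL_dxd (Lgeo H m) k (X t) (Xd t) (n t))
                 in \<forall>t1 t2. I t1 = I t2))"
proof -
  have P1: "lie_deriv (\<lambda>q. Y q + c *\<^sub>R ffield a a1 a2 bb \<mu> c q) (ppg H) p i j
            = 2 * (\<omega> p - c / 2 * \<mu> * p $ iu) * (ppg H p i j + c * Kdu i j)" for c p i j
  proof -
    have A: "lie_deriv (\<lambda>q. Y q + c *\<^sub>R ffield a a1 a2 bb \<mu> c q) (ppg H) p i j
      = 2 * \<omega> p * ppg H p i j + c * (2 * \<omega> p * Kdu i j - \<mu> * p$iu * ppg H p i j - c * \<mu> * p$iu * Kdu i j)"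
      using lie_split[OF smY sma sma1 sma2 smb, of c \<mu> "ppg H" p i j] CKV LF[OF om Heq, of c p]
      by simp
    show ?thesis unfolding A by (simp add: algebra_simps)
  qed
  show ?thesis
  proof (intro conjI allI impI)
  fix c p i j
  show "lie_deriv (\<lambda>q. Y q + c *\<^sub>R ffield a a1 a2 bb \<mu> c q) (ppg H) p i j
            = 2 * (\<omega> p - c / 2 * \<mu> * p $ iu) * (ppg H p i j + c * Kdu i j)" by (rule P1)
next
  fix m X Xd n \<pi>v
  assume asm: "EL_solution (Lgeo H m) X Xd n
            \<and> (\<forall>t. dL_dxd (Lgeo H m) iv (X t) (Xd t) (n t) = \<pi>v) \<and> \<pi>v \<noteq> 0"
  then have EL: "EL_solution (Lgeo H m) X Xd n" and hp: "\<And>t. dL_dxd (Lgeo H m) iv (X t) (Xd t) (n t) = \<pi>v"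
    and pv: "\<pi>v \<noteq> 0" by auto
  have Xd: "\<And>t. (X has_vector_derivative Xd t) (at t)" and npos: "\<And>t. n t > 0"
    and ELx: "\<And>i t. ((\<lambda>s. dL_dxd (Lgeo H m) i (X s) (Xd s) (n s)) has_real_derivative
               dL_dx (Lgeo H m) i (X t) (Xd t) (n t)) (at t)"
    and ELn: "\<And>t. dL_dn (Lgeo H m) (X t) (Xd t) (n t) = 0"
    using EL unfolding EL_solution_def by auto
  define c where "c = m\<^sup>2 / \<pi>v\<^sup>2"
  define U where "U = (\<lambda>q. Y q + c *\<^sub>R ffield a a1 a2 bb \<mu> c q)"
  define P where "P = (\<lambda>k t. dL_dxd (Lgeo H m) k (X t) (Xd t) (n t))"
  define I where "I = (\<lambda>t. \<Sum>k\<in>UNIV. U (X t) $ k * P k t)"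
  have D0: "(I has_real_derivative 0) (at t)" for t
  proof -
    have nz: "n t \<noteq> 0" using npos[of t] by simp
    have Pk: "P k t = (\<Sum>b\<in>UNIV. ppg H (X t) k b * Xd t $ b) / n t" for k
      unfolding P_def using dLxd[OF nz] .
    have dI: "(I has_real_derivative
        (\<Sum>k\<in>UNIV. (\<Sum>r\<in>UNIV. Xd t $ r * partial r (\<lambda>q. U q $ k) (X t)) * P k t
            + dL_dx (Lgeo H m) k (X t) (Xd t) (n t) * U (X t) $ k)) (at t)"
      unfolding I_def
      apply (rule DERIV_sum)
      apply (rule DERIV_mult)
       apply (unfold U_def)
       apply (rule Ups_chain[OF smY sma sma1 sma2 smb Xd])
      apply (unfold P_def)
      apply (rule ELx)
      done
    have "(\<Sum>k\<in>UNIV. (\<Sum>r\<in>UNIV. Xd t $ r * partial r (\<lambda>q. U q $ k) (X t)) * P k t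
            + dL_dx (Lgeo H m) k (X t) (Xd t) (n t) * U (X t) $ k)
       = (\<Sum>k\<in>UNIV. (\<Sum>r\<in>UNIV. Xd t $ r * partial r (\<lambda>q. U q $ k) (X t)) * ((\<Sum>b\<in>UNIV. ppg H (X t) k b * Xd t $ b) / n t)
      + U (X t) $ k * (partial k (Hfun H) (X t) * (Xd t $ iu)\<^sup>2 / (2 * n t)))"
      by (simp add: Pk dLx[OF smH nz] mult.commute)
    also have "\<dots> = (\<Sum>a\<in>UNIV. \<Sum>b\<in>UNIV. lie_deriv U (ppg H) (X t) a b * Xd t $ a * Xd t $ b) / (2 * n t)"
      by (rule quad[OF nz])
    also have "\<dots> = (\<Sum>a\<in>UNIV. \<Sum>b\<in>UNIV. 2 * (\<omega> (X t) - c / 2 * \<mu> * X t $ iu) * (ppg H (X t) a b + c * Kdu a b) * Xd t $ a * Xd t $ b) / (2 * n t)"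
      unfolding U_def P1 ..
    also have "\<dots> = 0"
    proof -
      have Q: "(\<Sum>a\<in>UNIV. \<Sum>b\<in>UNIV. ppg H (X t) a b * Xd t $ a * Xd t $ b) = - m\<^sup>2 * (n t)\<^sup>2"
        using ELn[of t] dLn[OF nz, of H m "X t" "Xd t"] nz by (simp add: field_simps)
      have vu: "Xd t $ iu = \<pi>v * n t"
        using hp[of t] dLxd[OF nz, of H m iv "X t" "Xd t"] nz dist4
        by (simp add: sum4 ppg_def field_simps)
      have "(\<Sum>a\<in>UNIV. \<Sum>b\<in>UNIV. 2 * (\<omega> (X t) - c / 2 * \<mu> * X t $ iu) * (ppg H (X t) a b + c * Kdu a b) * Xd t $ a * Xd t $ b)
        = 2 * (\<omega> (X t) - c / 2 * \<mu> * X t $ iu) * ((\<Sum>a\<in>UNIV. \<Sum>b\<in>UNIV. ppg H (X t) a b * Xd t $ a * Xd t $ b) + c * (Xd t $ iu)\<^sup>2)"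
        using dist4 by (simp add: sum4 Kdu_def algebra_simps power2_eq_square)
      also have "\<dots> = 0" unfolding Q vu c_def using pv by (simp add: field_simps power2_eq_square)
      finally show ?thesis by simp
    qed
    finally show ?thesis using dI by simp
  qed
  have "\<forall>t1 t2. I t1 = I t2" using D0 DERIV_isconst_all by blast
  then show "let c = m\<^sup>2 / \<pi>v\<^sup>2;
                     I = (\<lambda>t. \<Sum>k\<in>UNIV. (Y (X t) + c *\<^sub>R ffield a a1 a2 bb \<mu> c (X t)) $ k
                                       * dL_dxd (Lgeo H m) k (X t) (Xd t) (n t))
                 in \<forall>t1 t2. I t1 = I t2"
    unfolding Let_def I_def U_def P_def c_def by simp
qed

qed

end
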